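(* Let $xy\in\{0,1\}^n$ be a characteristic string. Then there is an $x$-balanced fork $F\vdash xy$ if and only if $\mu_x(y)\ge0$.
   Context: Characteristic strings and forks. A characteristic string is $w=w_1\dots w_n\in\{0,1\}^n$; index $i$ is honest if $w_i=0$ and adversarial if $w_i=1$. A fork for $w$ is a rooted tree with edges directed away from the root $r$ and labeling $\ell:V\to\{0,\dots,n\}$ with (F1) $\ell(r)=0$; (F2) labels strictly increasing along directed paths; (F3) each honest index labels exactly one vertex; (F4) for honest $i<j$ the vertex labeled $i$ has strictly smaller depth than the vertex labeled $j$. Write $F\vdash w$. A vertex is honest if it is the root or labeled by an honest index. A tine is a directed path from the root; its length is its number of edges, $\ell(t)$ the label of its last vertex; $\mathrm{height}(F)$ is the maximum tine length. A fork is closed if every leaf is honest; a closed fork has a unique longest tine $\hat t$. For closed $F\vdash w$ and tine $t$: $\mathrm{gap}(t)=\mathrm{length}(\hat t)-\mathrm{length}(t)$, $\mathrm{reserve}(t)=|\{i:w_i=1,\ i>\ell(t)\}|$, $\mathrm{reach}(t)=\mathrm{reserve}(t)-\mathrm{gap}(t)$. For $w=xy$, tines $t_1,t_2$ are disjoint over $y$ (written $t_1\not\sim_x t_2$) if they share no edge terminating at a vertex with label $>|x|$ (a tine may be paired with itself). $\mu_x(F)=\max\min\{\mathrm{reach}(t_1),\mathrm{reach}(t_2)\}$ over pairs disjoint over $y$, and $\mu_x(y)=\max\{\mu_x(F):F\vdash xy\text{ closed}\}$. A fork $F\vdash xy$ is $x$-balanced if it contains tines $t_1\not\sim_x t_2$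 with $\mathrm{length}(t_1)=\mathrm{length}(t_2)=\mathrm{height}(F)$. *)

theory Defs
  imports Main "HOL-Library.Sublist"
begin

text \<open>Characteristic strings: a bool list w, where index i (1-based) is adversarial
  iff w ! (i - 1) = True (i.e. w_i = 1) and honest iff w ! (i - 1) = False (w_i = 0).\<close>

type_synonym charstring = "bool list"

definition honest_idx :: "charstring \<Rightarrow> nat \<Rightarrow> bool" where
  "honest_idx w i \<longleftrightarrow> 1 \<le> i \<and> i \<le> length w \<and> \<not> w ! (i - 1)"

definition adv_idx :: "charstring \<Rightarrow> nat \<Rightarrow> bool" where
  "adv_idx w i \<longleftrightarrow> 1 \<le> i \<and> i \<le> length w \<and> w ! (i - 1)"

text \<open>Forks are encoded as rooted trees given by the set of their vertices, where a vertex
  is identified with the directed path from the root to it: a list of edges, each edge given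
  by (label of the target vertex, a tag distinguishing siblings).
  The parent of a nonempty vertex v is butlast v, its depth is length v. Every rooted labelled
  tree is isomorphic to such an encoding. Tines (paths from the root) correspond one-to-one
  to vertices (their endpoints).\<close>

type_synonym vertex = "(nat \<times> nat) list"
type_synonym fork = "vertex set"

definition lab :: "vertex \<Rightarrow> nat" where
  "lab v = (if v = [] then 0 else fst (last v))"

definition is_fork :: "charstring \<Rightarrow> fork \<Rightarrow> bool" where
  "is_fork w F \<longleftrightarrow>
     finite F \<and> [] \<in> F \<and> (\<forall>v\<in>F. \<forall>u. prefix u v \<longrightarrow> u \<in> F) \<comment> \<open>rooted tree\<close>
   \<and> (\<forall>v\<in>F. \<forall>e\<in>set v. fst e \<le> length w) \<comment> \<open>labels in {0..n}\<close>
   \<and> (\<forall>v\<in>F. sorted_wrt (<) (0 # map fst v)) \<comment> \<open>(F1),(F2)\<close>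
   \<and> (\<forall>i. honest_idx w i \<longrightarrow> (\<exists>!v. v \<in> F \<and> v \<noteq> [] \<and> lab v = i)) \<comment> \<open>(F3)\<close>
   \<and> (\<forall>u\<in>F. \<forall>v\<in>F. u \<noteq> [] \<longrightarrow> v \<noteq> [] \<longrightarrow> honest_idx w (lab u) \<longrightarrow> honest_idx w (lab v)
        \<longrightarrow> lab u < lab v \<longrightarrow> length u < length v) \<comment> \<open>(F4)\<close>"

definition height :: "fork \<Rightarrow> nat" where
  "height F = Max (length ` F)"

definition is_leaf :: "fork \<Rightarrow> vertex \<Rightarrow> bool" where
  "is_leaf F v \<longleftrightarrow> v \<in> F \<and> \<not> (\<exists>u\<in>F. strict_prefix v u)"

definition honest_vertex :: "charstring \<Rightarrow> vertex \<Rightarrow> bool" where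
  "honest_vertex w v \<longleftrightarrow> v = [] \<or> honest_idx w (lab v)"

definition closed_fork :: "charstring \<Rightarrow> fork \<Rightarrow> bool" where
  "closed_fork w F \<longleftrightarrow> is_fork w F \<and> (\<forall>v. is_leaf F v \<longrightarrow> honest_vertex w v)"

text \<open>In a closed fork the unique longest tine has length height F.\<close>
definition gap :: "fork \<Rightarrow> vertex \<Rightarrow> nat" where
  "gap F t = height F - length t"

definition reserve :: "charstring \<Rightarrow> vertex \<Rightarrow> nat" where
  "reserve w t = card {i. adv_idx w i \<and> i > lab t}"

definition reach :: "charstring \<Rightarrow> fork \<Rightarrow> vertex \<Rightarrow> int" where
  "reach w F t = int (reserve w t) - int (gap F t)"

text \<open>Tines t1, t2 are disjoint over y (w = x y): they share no edge terminating at a vertex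
  with label > |x|. The edges of tine t terminate exactly at the nonempty prefixes of t.\<close>
definition disjoint_over :: "nat \<Rightarrow> vertex \<Rightarrow> vertex \<Rightarrow> bool" where
  "disjoint_over m t1 t2 \<longleftrightarrow>
     \<not> (\<exists>p. p \<noteq> [] \<and> prefix p t1 \<and> prefix p t2 \<and> lab p > m)"

definition mu_fork :: "charstring \<Rightarrow> charstring \<Rightarrow> fork \<Rightarrow> int" where
  "mu_fork x y F = Max {min (reach (x @ y) F t1) (reach (x @ y) F t2) | t1 t2.
      t1 \<in> F \<and> t2 \<in> F \<and> disjoint_over (length x) t1 t2}"

definition mu :: "charstring \<Rightarrow> charstring \<Rightarrow> int" where
  "mu x y = Max {mu_fork x y F | F. closed_fork (x @ y) F}"

definition x_balanced :: "charstring \<Rightarrow> charstring \<Rightarrow> fork \<Rightarrow> bool" where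
  "x_balanced x y F \<longleftrightarrow> is_fork (x @ y) F \<and>
     (\<exists>t1\<in>F. \<exists>t2\<in>F. disjoint_over (length x) t1 t2 \<and>
        length t1 = height F \<and> length t2 = height F)"

end

theory Submission
  imports Defs
begin

lemma prefix_take_eq: "prefix p l \<Longrightarrow> p = take (length p) l"
  by (metis append_eq_conv_conj prefix_def)

lemma sorted_le_lab:
  assumes "sorted_wrt (<) (0 # map fst v)" "a \<in> set (0 # map fst v)"
  shows "a \<le> lab v"
  using assms
proof (induction v arbitrary: a rule: rev_induct)
  case Nil thus ?case by (simp add: lab_def)
next
  case (snoc e vs)
  have "sorted_wrt (<) ((0 # map fst vs) @ [fst e])" using snoc.prems(1) by simp
  hence A: "\<forall>b\<in>set (0 # map fst vs). b < fst e"
    by (simp only: sorted_wrt_append) simp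
  show ?case using snoc.prems(2) A by (auto simp: lab_def)
qed

lemma lab_in: "lab v \<in> set (0 # map fst v)"
  by (cases v rule: rev_cases) (auto simp: lab_def)

lemma adv_not_honest: "adv_idx w i \<Longrightarrow> \<not> honest_idx w i"
  by (simp add: adv_idx_def honest_idx_def)

lemma fork_len:
  assumes "is_fork w F" "v \<in> F"
  shows "length v \<le> length w"
proof -
  have s: "sorted_wrt (<) (0 # map fst v)" using assms by (simp add: is_fork_def)
  hence d: "distinct (map fst v)" by (simp add: strict_sorted_iff)
  have "set (map fst v) \<subseteq> {1..length w}"
  proof
    fix a assume a: "a \<in> set (map fst v)"
    hence "0 < a" using s by auto
    moreover have "a \<le> length w" using assms a unfolding is_fork_def by auto
    ultimately show "a \<in> {1..length w}" by simp
  qed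
  hence "card (set (map fst v)) \<le> length w"
    by (metis card_atLeastAtMost card_mono diff_Suc_1 finite_atLeastAtMost)
  thus ?thesis using distinct_card[OF d] by simp
qed

lemma height_le:
  assumes "is_fork w F"
  shows "height F \<le> length w"
proof -
  have "finite F" "[] \<in> F" using assms by (auto simp: is_fork_def)
  thus ?thesis unfolding height_def using fork_len[OF assms]
    by (subst Max_le_iff) auto
qed

lemma len_le_height:
  assumes "is_fork w F" "v \<in> F"
  shows "length v \<le> height F"
  using assms unfolding height_def is_fork_def by auto

lemma reserve_le: "reserve w t \<le> length w"
proof -
  have "{i. adv_idx w i \<and> i > lab t} \<subseteq> {1..length w}" by (auto simp: adv_idx_def)
  hence "reserve w t \<le> card {1..length w}" unfolding reserve_def
    by (intro card_mono) auto
  thus ?thesis by simp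
qed

lemma reach_bounds:
  assumes "is_fork w F"
  shows "reach w F t \<in> {- int (length w) .. int (length w)}"
  using reserve_le[of w t] height_le[OF assms] unfolding reach_def gap_def by auto

definition pairs where
  "pairs m F = {(t1, t2). t1 \<in> F \<and> t2 \<in> F \<and> disjoint_over m t1 t2}"

lemma mu_fork_img:
  "mu_fork x y F = Max ((\<lambda>(t1,t2). min (reach (x @ y) F t1) (reach (x @ y) F t2)) ` pairs (length x) F)"
  unfolding mu_fork_def pairs_def by (rule arg_cong[where f=Max]) auto

lemma pairs_fin: "is_fork w F \<Longrightarrow> finite (pairs m F)"
  unfolding pairs_def is_fork_def
  by (rule finite_subset[of _ "F \<times> F"]) auto

lemma pairs_ne: "is_fork w F \<Longrightarrow> ([],[]) \<in> pairs m F"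
  unfolding pairs_def is_fork_def disjoint_over_def by auto

lemma mu_fork_bounds:
  assumes "is_fork (x @ y) F"
  shows "mu_fork x y F \<in> {- int (length (x@y)) .. int (length (x@y))}"
proof -
  let ?f = "(\<lambda>(t1,t2). min (reach (x @ y) F t1) (reach (x @ y) F t2))"
  have "Max (?f ` pairs (length x) F) \<in> ?f ` pairs (length x) F"
    using pairs_fin[OF assms] pairs_ne[OF assms] by (intro Max_in) auto
  then obtain t1 t2 where "mu_fork x y F = min (reach (x @ y) F t1) (reach (x @ y) F t2)"
    unfolding mu_fork_img by auto
  thus ?thesis using reach_bounds[OF assms, of t1] reach_bounds[OF assms, of t2] by auto
qed

lemma mu_fork_ge:
  assumes "is_fork (x @ y) F" "t1 \<in> F" "t2 \<in> F" "disjoint_over (length x) t1 t2"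
  shows "min (reach (x @ y) F t1) (reach (x @ y) F t2) \<le> mu_fork x y F"
  unfolding mu_fork_img using pairs_fin[OF assms(1)] assms(2-4)
  by (intro Max_ge) (auto simp: pairs_def)

lemma mu_set_fin: "finite {mu_fork x y F | F. closed_fork (x @ y) F}"
  by (rule finite_subset[of _ "{- int (length (x@y)) .. int (length (x@y))}"])
     (use mu_fork_bounds closed_fork_def in auto)

lemma fin_pref: "finite {p. prefix p l}"
proof -
  have "{p. prefix p l} = set (prefixes l)" by auto
  thus ?thesis by simp
qed

lemma add_tine:
  assumes F: "is_fork w F" and t: "t \<in> F"
    and s_sorted: "sorted_wrt (<) (map fst s)"
    and s_adv: "\<forall>e\<in>set s. adv_idx w (fst e) \<and> lab t < fst e"
  shows "is_fork w (F \<union> {p. prefix p (t @ s)})"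
proof -
  let ?G = "F \<union> {p. prefix p (t @ s)}"
  have F3: "\<forall>i. honest_idx w i \<longrightarrow> (\<exists>!v. v \<in> F \<and> v \<noteq> [] \<and> lab v = i)"
    using F by (simp add: is_fork_def)
  have Fpc: "\<And>v u. v \<in> F \<Longrightarrow> prefix u v \<Longrightarrow> u \<in> F" using F by (simp add: is_fork_def)
  have Flab: "\<And>v e. v \<in> F \<Longrightarrow> e \<in> set v \<Longrightarrow> fst e \<le> length w" using F by (simp add: is_fork_def)
  have F4: "\<forall>u\<in>F. \<forall>v\<in>F. u \<noteq> [] \<longrightarrow> v \<noteq> [] \<longrightarrow> honest_idx w (lab u) \<longrightarrow> honest_idx w (lab v)
        \<longrightarrow> lab u < lab v \<longrightarrow> length u < length v"
    using F by (simp add: is_fork_def)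
  have key: "v \<in> F" if v: "v \<in> ?G" "v \<noteq> []" "honest_idx w (lab v)" for v
  proof (cases "v \<in> F")
    case False
    hence pv: "prefix v (t @ s)" using v by auto
    then consider "prefix v t" | us where "v = t @ us" "prefix us s" by (auto simp: prefix_append)
    thus ?thesis
    proof cases
      case 1 thus ?thesis using Fpc t by blast
    next
      case 2
      show ?thesis
      proof (cases "us = []")
        case True thus ?thesis using 2 t by simp
      next
        case False
        hence "lab v = fst (last us)" using 2 by (simp add: lab_def)
        moreover have "last us \<in> set s" using False 2 set_mono_prefix by fastforce
        ultimately show ?thesis using s_adv v(3) adv_not_honest by metis
      qed
    qed
  qed simp
  have sorted_ts: "sorted_wrt (<) (0 # map fst (t @ s))"
  proof -
    have "sorted_wrt (<) (0 # map fst t)" using F t by (simp add: is_fork_def)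
    moreover have "\<forall>a\<in>set (0 # map fst t). \<forall>b\<in>set (map fst s). a < b"
    proof (intro ballI)
      fix a b assume a: "a \<in> set (0 # map fst t)" and b: "b \<in> set (map fst s)"
      have "a \<le> lab t" by (rule sorted_le_lab[OF \<open>sorted_wrt (<) (0 # map fst t)\<close> a])
      moreover have "lab t < b" using b s_adv by auto
      ultimately show "a < b" by simp
    qed
    ultimately have "sorted_wrt (<) ((0 # map fst t) @ map fst s)"
      using s_sorted by (simp only: sorted_wrt_append)
    thus ?thesis by simp
  qed
  show ?thesis
    unfolding is_fork_def
  proof (intro conjI)
    show "finite ?G" using F by (simp add: is_fork_def fin_pref)
    show "[] \<in> ?G" by simp
    show "\<forall>v\<in>?G. \<forall>u. prefix u v \<longrightarrow> u \<in> ?G"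
    proof (intro ballI allI impI)
      fix v u assume "v \<in> ?G" "prefix u v"
      then consider "v \<in> F" | "prefix u (t @ s)" using prefix_order.trans by blast
      thus "u \<in> ?G" using Fpc \<open>prefix u v\<close> by cases auto
    qed
    show "\<forall>v\<in>?G. \<forall>e\<in>set v. fst e \<le> length w"
    proof (intro ballI)
      fix v e assume "v \<in> ?G" "e \<in> set v"
      then consider "v \<in> F" | "e \<in> set t" | "e \<in> set s" using set_mono_prefix by fastforce
      thus "fst e \<le> length w"
        using Flab t s_adv \<open>e \<in> set v\<close> unfolding adv_idx_def by cases auto
    qed
    show "\<forall>v\<in>?G. sorted_wrt (<) (0 # map fst v)"
    proof
      fix v assume "v \<in> ?G"
      then consider "v \<in> F" | "prefix v (t @ s)" by auto
      thus "sorted_wrt (<) (0 # map fst v)"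
      proof cases
        case 1 thus ?thesis using F by (simp add: is_fork_def)
      next
        case 2
        hence "0 # map fst v = take (Suc (length v)) (0 # map fst (t @ s))"
          by (subst prefix_take_eq[OF 2]) (simp add: take_map)
        thus ?thesis using sorted_wrt_take[OF sorted_ts] by metis
      qed
    qed
    show "\<forall>i. honest_idx w i \<longrightarrow> (\<exists>!v. v \<in> ?G \<and> v \<noteq> [] \<and> lab v = i)"
    proof (intro allI impI)
      fix i assume hi: "honest_idx w i"
      have "\<exists>!v. v \<in> F \<and> v \<noteq> [] \<and> lab v = i"
        using F3 hi by simp
      then obtain v where v: "v \<in> F" "v \<noteq> []" "lab v = i"
        and u: "\<And>v'. v' \<in> F \<Longrightarrow> v' \<noteq> [] \<Longrightarrow> lab v' = i \<Longrightarrow> v' = v"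
        by (metis (mono_tags, lifting))
      show "\<exists>!v. v \<in> ?G \<and> v \<noteq> [] \<and> lab v = i"
      proof (rule ex1I[of _ v])
        show "v \<in> ?G \<and> v \<noteq> [] \<and> lab v = i" using v by simp
        fix v' assume "v' \<in> ?G \<and> v' \<noteq> [] \<and> lab v' = i"
        thus "v' = v" using key[of v'] hi u by auto
      qed
    qed
    show "\<forall>u\<in>?G. \<forall>v\<in>?G. u \<noteq> [] \<longrightarrow> v \<noteq> [] \<longrightarrow> honest_idx w (lab u) \<longrightarrow> honest_idx w (lab v)
        \<longrightarrow> lab u < lab v \<longrightarrow> length u < length v"
    proof (intro ballI impI)
      fix u v assume "u \<in> ?G" "v \<in> ?G" "u \<noteq> []" "v \<noteq> []" "honest_idx w (lab u)"
        "honest_idx w (lab v)" "lab u < lab v"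
      moreover have "u \<in> F" "v \<in> F" using key calculation by auto
      ultimately show "length u < length v" using F4 by simp
    qed
  qed
qed

definition advl :: "charstring \<Rightarrow> vertex \<Rightarrow> nat list" where
  "advl w t = filter (\<lambda>i. adv_idx w i \<and> lab t < i) [1..<Suc (length w)]"

lemma advl_set: "set (advl w t) = {i. adv_idx w i \<and> lab t < i}"
  unfolding advl_def adv_idx_def by auto

lemma advl_len: "length (advl w t) = reserve w t"
proof -
  have "distinct (advl w t)" unfolding advl_def by simp
  thus ?thesis unfolding reserve_def using advl_set distinct_card by metis
qed

lemma advl_sorted: "sorted_wrt (<) (advl w t)"
  unfolding advl_def by (intro sorted_wrt_filter sorted_wrt_upt)

lemma ext_props:
  shows "sorted_wrt (<) (map fst (map (\<lambda>i. (i,T)) (take g (advl w t))))"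
    and "\<forall>e\<in>set (map (\<lambda>i. (i,T)) (take g (advl w t))). adv_idx w (fst e) \<and> lab t < fst e"
proof -
  show "sorted_wrt (<) (map fst (map (\<lambda>i. (i,T)) (take g (advl w t))))"
    using sorted_wrt_take[OF advl_sorted] by (simp add: o_def)
  show "\<forall>e\<in>set (map (\<lambda>i. (i,T)) (take g (advl w t))). adv_idx w (fst e) \<and> lab t < fst e"
    using advl_set[of w t] by (auto dest: in_set_takeD)
qed

lemma last_tag:
  assumes "prefix p (t @ map (\<lambda>i. (i,T)) l)" "length t < length p"
  shows "snd (last p) = T"
proof -
  obtain us where us: "p = t @ us" "prefix us (map (\<lambda>i. (i,T)) l)"
    using assms by (auto simp: prefix_append dest: prefix_length_le)
  hence "us \<noteq> []" using assms(2) by auto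
  hence "last p = last us" "last us \<in> set us" using us by auto
  moreover have "set us \<subseteq> set (map (\<lambda>i. (i,T)) l)" using us(2) set_mono_prefix by blast
  ultimately show ?thesis by auto
qed

lemma prefix_short:
  assumes "prefix p (t @ s)" "length p \<le> length t"
  shows "prefix p t"
  using assms by (auto simp: prefix_append)

lemma extend:
  assumes F: "is_fork w F" and t1: "t1 \<in> F" and t2: "t2 \<in> F"
    and dj: "disjoint_over m t1 t2"
    and r1: "reach w F t1 \<ge> 0" and r2: "reach w F t2 \<ge> 0"
  shows "\<exists>F'. is_fork w F' \<and> (\<exists>e1\<in>F'. \<exists>e2\<in>F'. disjoint_over m e1 e2
           \<and> length e1 = height F' \<and> length e2 = height F')"
proof -
  define T0 where "T0 = Suc (Max (snd ` \<Union> (set ` F)))"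
  have finF: "finite F" using F by (simp add: is_fork_def)
  have tagF: "snd e < T0" if "v \<in> F" "e \<in> set v" for v e
  proof -
    have "snd e \<le> Max (snd ` \<Union> (set ` F))" using finF that by (intro Max_ge) auto
    thus ?thesis unfolding T0_def by simp
  qed
  define s1 where "s1 = map (\<lambda>i. (i,T0)) (take (gap F t1) (advl w t1))"
  define s2 where "s2 = map (\<lambda>i. (i,Suc T0)) (take (gap F t2) (advl w t2))"
  define e1 where "e1 = t1 @ s1"
  define e2 where "e2 = t2 @ s2"
  define F1 where "F1 = F \<union> {p. prefix p e1}"
  define F2 where "F2 = F1 \<union> {p. prefix p e2}"
  have fF1: "is_fork w F1" unfolding F1_def e1_def s1_def
    by (rule add_tine[OF F t1 ext_props])
  have t2F1: "t2 \<in> F1" using t2 unfolding F1_def by simp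
  have fF2: "is_fork w F2" unfolding F2_def e2_def s2_def
    by (rule add_tine[OF fF1 t2F1 ext_props])
  have h1: "length t1 \<le> height F" "length t2 \<le> height F" using len_le_height F t1 t2 by auto
  have g1: "gap F t1 \<le> length (advl w t1)" using r1 unfolding reach_def advl_len by simp
  have g2: "gap F t2 \<le> length (advl w t2)" using r2 unfolding reach_def advl_len by simp
  have le1: "length e1 = height F" using h1 g1 unfolding e1_def s1_def gap_def by simp
  have le2: "length e2 = height F" using h1 g2 unfolding e2_def s2_def gap_def by simp
  have hF2: "height F2 = height F"
    unfolding height_def[of F2]
  proof (rule Max_eqI)
    show "finite (length ` F2)" using fF2 by (simp add: is_fork_def)
    show "height F \<in> length ` F2" using le1 unfolding F2_def F1_def by force
    fix y assume "y \<in> length ` F2"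
    then obtain v where "v \<in> F2" "y = length v" by auto
    then consider "v \<in> F" | "prefix v e1" | "prefix v e2" unfolding F2_def F1_def by auto
    thus "y \<le> height F"
      using len_le_height[OF F] le1 le2 \<open>y = length v\<close> prefix_length_le by cases fastforce+
  qed
  have dje: "disjoint_over m e1 e2"
    unfolding disjoint_over_def
  proof
    assume "\<exists>p. p \<noteq> [] \<and> prefix p e1 \<and> prefix p e2 \<and> m < lab p"
    then obtain p where p: "p \<noteq> []" "prefix p e1" "prefix p e2" "m < lab p" by blast
    show False
    proof (cases "length p \<le> length t1 \<and> length p \<le> length t2")
      case True
      hence "prefix p t1" "prefix p t2" using p prefix_short unfolding e1_def e2_def by blast+
      thus False using dj p unfolding disjoint_over_def by blast
    next
      case False
      have lp: "last p \<in> set p" using p by simp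
      show False
      proof (cases "length t1 < length p")
        case c1: True
        have tg: "snd (last p) = T0" by (rule last_tag[OF p(2)[unfolded e1_def s1_def] c1])
        show False
        proof (cases "length t2 < length p")
          case True
          have "snd (last p) = Suc T0" by (rule last_tag[OF p(3)[unfolded e2_def s2_def] True])
          thus False using tg by simp
        next
          case False
          hence "prefix p t2" using p(3) prefix_short unfolding e2_def by (simp add: not_less)
          hence "p \<in> F" using F t2 unfolding is_fork_def by blast
          thus False using tagF lp tg by fastforce
        qed
      next
        case c1: False
        hence c2: "length t2 < length p" using False by simp
        have tg: "snd (last p) = Suc T0" by (rule last_tag[OF p(3)[unfolded e2_def s2_def] c2])
        have "prefix p t1" using c1 p(2) prefix_short unfolding e1_def by (simp add: not_less)
        hence "p \<in> F" using F t1 unfolding is_fork_def by blast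
        thus False using tagF[of p "last p"] lp tg by simp
      qed
    qed
  qed
  have "e1 \<in> F2" "e2 \<in> F2" unfolding F2_def F1_def by auto
  thus ?thesis
    using fF2 dje hF2 le1 le2 by metis
qed

definition trim :: "charstring \<Rightarrow> fork \<Rightarrow> fork" where
  "trim w F = {v\<in>F. \<exists>u\<in>F. honest_vertex w u \<and> prefix v u}"

lemma trim_closed:
  assumes F: "is_fork w F"
  shows "closed_fork w (trim w F)"
proof -
  let ?G = "trim w F"
  have F3: "\<forall>i. honest_idx w i \<longrightarrow> (\<exists>!v. v \<in> F \<and> v \<noteq> [] \<and> lab v = i)"
    using F by (simp add: is_fork_def)
  have F4: "\<forall>u\<in>F. \<forall>v\<in>F. u \<noteq> [] \<longrightarrow> v \<noteq> [] \<longrightarrow> honest_idx w (lab u) \<longrightarrow> honest_idx w (lab v)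
        \<longrightarrow> lab u < lab v \<longrightarrow> length u < length v"
    using F by (simp add: is_fork_def)
  have Fpc: "\<And>v u. v \<in> F \<Longrightarrow> prefix u v \<Longrightarrow> u \<in> F" using F by (simp add: is_fork_def)
  have Flab: "\<And>v e. v \<in> F \<Longrightarrow> e \<in> set v \<Longrightarrow> fst e \<le> length w" using F by (simp add: is_fork_def)
  have Fs: "\<And>v. v \<in> F \<Longrightarrow> sorted_wrt (<) (0 # map fst v)" using F by (simp add: is_fork_def)
  have fin: "finite F" "[] \<in> F" using F by (auto simp: is_fork_def)
  have sub: "?G \<subseteq> F" unfolding trim_def by auto
  have key: "v \<in> ?G" if "v \<in> F" "honest_idx w (lab v)" for v
    using that unfolding trim_def honest_vertex_def by auto
  have "is_fork w ?G"
    unfolding is_fork_def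
  proof (intro conjI)
    show "finite ?G" using fin sub finite_subset by blast
    show "[] \<in> ?G" using fin unfolding trim_def honest_vertex_def by auto
    show "\<forall>v\<in>?G. \<forall>u. prefix u v \<longrightarrow> u \<in> ?G"
      unfolding trim_def using Fpc prefix_order.trans by blast
    show "\<forall>v\<in>?G. \<forall>e\<in>set v. fst e \<le> length w" using Flab sub by blast
    show "\<forall>v\<in>?G. sorted_wrt (<) (0 # map fst v)" using Fs sub by blast
    show "\<forall>i. honest_idx w i \<longrightarrow> (\<exists>!v. v \<in> ?G \<and> v \<noteq> [] \<and> lab v = i)"
    proof (intro allI impI)
      fix i assume hi: "honest_idx w i"
      have "\<exists>!v. v \<in> F \<and> v \<noteq> [] \<and> lab v = i"
        using F3 hi by simp
      then obtain v where v: "v \<in> F" "v \<noteq> []" "lab v = i"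
        and u: "\<And>v'. v' \<in> F \<Longrightarrow> v' \<noteq> [] \<Longrightarrow> lab v' = i \<Longrightarrow> v' = v"
        by (metis (mono_tags, lifting))
      show "\<exists>!v. v \<in> ?G \<and> v \<noteq> [] \<and> lab v = i"
      proof (rule ex1I[of _ v])
        show "v \<in> ?G \<and> v \<noteq> [] \<and> lab v = i" using v key hi by simp
        fix v' assume "v' \<in> ?G \<and> v' \<noteq> [] \<and> lab v' = i"
        thus "v' = v" using sub u by auto
      qed
    qed
    show "\<forall>u\<in>?G. \<forall>v\<in>?G. u \<noteq> [] \<longrightarrow> v \<noteq> [] \<longrightarrow> honest_idx w (lab u) \<longrightarrow> honest_idx w (lab v)
        \<longrightarrow> lab u < lab v \<longrightarrow> length u < length v"
      using F4 sub by blast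
  qed
  moreover have "honest_vertex w v" if "is_leaf ?G v" for v
  proof -
    have "v \<in> ?G" "\<not> (\<exists>u\<in>?G. strict_prefix v u)" using that unfolding is_leaf_def by auto
    then obtain u where u: "u \<in> F" "honest_vertex w u" "prefix v u" unfolding trim_def by auto
    hence "u \<in> ?G" unfolding trim_def by auto
    hence "\<not> strict_prefix v u" using \<open>\<not> (\<exists>u\<in>?G. strict_prefix v u)\<close> by blast
    hence "v = u" using u(3) by (simp add: strict_prefix_def)
    thus ?thesis using u by simp
  qed
  ultimately show ?thesis unfolding closed_fork_def by blast
qed

lemma hp:
  assumes F: "is_fork w F" and t: "t \<in> F"
  shows "\<exists>t'. prefix t' t \<and> honest_vertex w t' \<and> length t - length t' \<le> reserve w t'"
proof -
  define k where "k = (GREATEST k. k \<le> length t \<and> honest_vertex w (take k t))"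
  have ex: "0 \<le> length t \<and> honest_vertex w (take 0 t)" by (simp add: honest_vertex_def)
  have bnd: "\<forall>y. y \<le> length t \<and> honest_vertex w (take y t) \<longrightarrow> y \<le> length t" by simp
  have k: "k \<le> length t \<and> honest_vertex w (take k t)"
    unfolding k_def by (rule GreatestI_nat[where k=0 and b="length t"]) (use ex in auto)
  have notk: "\<not> honest_vertex w (take j t)" if "k < j" "j \<le> length t" for j
  proof
    assume "honest_vertex w (take j t)"
    hence "j \<le> k" unfolding k_def using that(2) by (intro Greatest_le_nat[where b="length t"]) auto
    thus False using that by simp
  qed
  define t' where "t' = take k t"
  have st: "sorted_wrt (<) (0 # map fst t)" using F t by (simp add: is_fork_def)
  have split: "0 # map fst t = (0 # map fst t') @ map fst (drop k t)"
    unfolding t'_def by (metis append_Cons append_take_drop_id map_append)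
  have st2: "sorted_wrt (<) ((0 # map fst t') @ map fst (drop k t))" using st split by metis
  have "set (map fst (drop k t)) \<subseteq> {i. adv_idx w i \<and> lab t' < i}"
  proof
    fix a assume a: "a \<in> set (map fst (drop k t))"
    then obtain j where j: "k \<le> j" "j < length t" "a = fst (t ! j)"
      by (auto simp: in_set_conv_nth) (metis add.commute fst_conv le_add2 less_diff_conv)
    have "take (Suc j) t = take j t @ [t ! j]" using j by (simp add: take_Suc_conv_app_nth)
    hence lab_eq: "lab (take (Suc j) t) = a" using j by (simp add: lab_def)
    have "\<not> honest_vertex w (take (Suc j) t)" using notk j by simp
    hence nh: "\<not> honest_idx w a" using lab_eq unfolding honest_vertex_def by simp
    have "t ! j \<in> set t" using j by simp
    hence "0 < a" "a \<le> length w" using st F t j unfolding is_fork_def by auto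
    hence adv: "adv_idx w a" using nh unfolding adv_idx_def honest_idx_def by simp
    have "lab t' < a" using st2 lab_in[of t'] a by (simp only: sorted_wrt_append)
    thus "a \<in> {i. adv_idx w i \<and> lab t' < i}" using adv by simp
  qed
  moreover have "distinct (map fst (drop k t))"
    using st2 by (simp add: sorted_wrt_append strict_sorted_iff)
  ultimately have "length (drop k t) \<le> reserve w t'"
    unfolding reserve_def
    by (metis card_mono distinct_card length_map finite_subset finite_atLeastAtMost
        advl_set[of w t'] List.finite_set)
  hence "length t - length t' \<le> reserve w t'" using k unfolding t'_def by simp
  moreover have "prefix t' t" unfolding t'_def by (simp add: take_is_prefix)
  ultimately show ?thesis using k t'_def by blast
qed

lemma exists_fork: "\<exists>F. is_fork w F"
proof -
  define hs where "hs = filter (honest_idx w) [1..<Suc (length w)]"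
  define c where "c = map (\<lambda>i. (i, 0::nat)) hs"
  define F where "F = {p. prefix p c}"
  have hs_sorted: "sorted_wrt (<) hs" unfolding hs_def by (intro sorted_wrt_filter sorted_wrt_upt)
  have hs_set: "set hs = {i. honest_idx w i}" unfolding hs_def honest_idx_def by auto
  have hs_dist: "distinct hs" unfolding hs_def by simp
  have mc: "map fst c = hs" unfolding c_def by (simp add: o_def)
  have lc: "length c = length hs" unfolding c_def by simp
  have labp: "lab p = hs ! (length p - 1) \<and> length p \<le> length hs"
    if "prefix p c" "p \<noteq> []" for p
  proof -
    have pe: "p = take (length p) c" using prefix_take_eq[OF that(1)] .
    have le: "length p \<le> length hs" using prefix_length_le[OF that(1)] lc by simp
    have "take (length p) c = take (length p - 1) c @ [c ! (length p - 1)]"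
      using that(2) le lc take_Suc_conv_app_nth[of "length p - 1" c] by (cases p) auto
    hence "last p = c ! (length p - 1)" using pe by (metis last_snoc)
    thus ?thesis using that(2) le lc unfolding lab_def c_def by (cases p) auto
  qed
  have s0: "sorted_wrt (<) (0 # hs)" using hs_sorted hs_set by (auto simp: honest_idx_def)
  have "is_fork w F"
    unfolding is_fork_def
  proof (intro conjI)
    show "finite F" unfolding F_def by (rule fin_pref)
    show "[] \<in> F" unfolding F_def by simp
    show "\<forall>v\<in>F. \<forall>u. prefix u v \<longrightarrow> u \<in> F" unfolding F_def using prefix_order.trans by blast
    show "\<forall>v\<in>F. \<forall>e\<in>set v. fst e \<le> length w"
    proof (intro ballI)
      fix v e assume "v \<in> F" "e \<in> set v"
      hence "e \<in> set c" unfolding F_def using set_mono_prefix by blast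
      hence "fst e \<in> set hs" using mc by force
      thus "fst e \<le> length w" using hs_set honest_idx_def by auto
    qed
    show "\<forall>v\<in>F. sorted_wrt (<) (0 # map fst v)"
    proof
      fix v assume "v \<in> F"
      hence "0 # map fst v = take (Suc (length v)) (0 # hs)"
        unfolding F_def mc[symmetric] by (subst prefix_take_eq[of v c]) (simp_all add: take_map)
      thus "sorted_wrt (<) (0 # map fst v)" using sorted_wrt_take[OF s0] by metis
    qed
    show "\<forall>i. honest_idx w i \<longrightarrow> (\<exists>!v. v \<in> F \<and> v \<noteq> [] \<and> lab v = i)"
    proof (intro allI impI)
      fix i assume "honest_idx w i"
      then obtain j where j: "j < length hs" "hs ! j = i" using hs_set by (metis in_set_conv_nth mem_Collect_eq)
      define v where "v = take (Suc j) c"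
      have v: "prefix v c" "v \<noteq> []" unfolding v_def using j lc by (auto simp: take_is_prefix)
      have lv: "length v = Suc j" unfolding v_def using j lc by simp
      show "\<exists>!v. v \<in> F \<and> v \<noteq> [] \<and> lab v = i"
      proof (rule ex1I[of _ v])
        show "v \<in> F \<and> v \<noteq> [] \<and> lab v = i" using v labp[OF v] lv j unfolding F_def by simp
        fix v' assume v': "v' \<in> F \<and> v' \<noteq> [] \<and> lab v' = i"
        hence pv': "prefix v' c" unfolding F_def by simp
        have "hs ! (length v' - 1) = hs ! j" using labp[OF pv'] v' j by simp
        hence "length v' - 1 = j" using labp[OF pv'] v' j hs_dist nth_eq_iff_index_eq
          by (metis diff_less length_greater_0_conv zero_less_one less_le_trans)
        hence "length v' = length v" using lv v' by (cases v') auto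
        thus "v' = v" using prefix_take_eq[OF pv'] prefix_take_eq[OF v(1)] by metis
      qed
    qed
    show "\<forall>u\<in>F. \<forall>v\<in>F. u \<noteq> [] \<longrightarrow> v \<noteq> [] \<longrightarrow> honest_idx w (lab u) \<longrightarrow> honest_idx w (lab v)
        \<longrightarrow> lab u < lab v \<longrightarrow> length u < length v"
    proof (intro ballI impI)
      fix u v assume uv: "u \<in> F" "v \<in> F" "u \<noteq> []" "v \<noteq> []" "lab u < lab v"
      have pu: "prefix u c" and pv: "prefix v c" using uv unfolding F_def by auto
      have "\<not> length v - 1 \<le> length u - 1"
      proof
        assume "length v - 1 \<le> length u - 1"
        hence "hs ! (length v - 1) \<le> hs ! (length u - 1)"
          using labp[OF pu uv(3)] uv(3) hs_sorted
          by (intro sorted_nth_mono) (auto simp: strict_sorted_iff less_le_trans[OF diff_less])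
        thus False using labp[OF pu uv(3)] labp[OF pv uv(4)] uv(5) by simp
      qed
      thus "length u < length v" by simp
    qed
  qed
  thus ?thesis by blast
qed

theorem fact1:
  fixes x y :: charstring
  shows "(\<exists>F. x_balanced x y F) \<longleftrightarrow> mu x y \<ge> 0"
proof
  assume "\<exists>F. x_balanced x y F"
  then obtain F t1 t2 where F: "is_fork (x @ y) F" and t: "t1 \<in> F" "t2 \<in> F"
    and dj: "disjoint_over (length x) t1 t2" and l: "length t1 = height F" "length t2 = height F"
    unfolding x_balanced_def by blast
  let ?w = "x @ y"
  let ?G = "trim ?w F"
  have G: "closed_fork ?w ?G" by (rule trim_closed[OF F])
  hence fG: "is_fork ?w ?G" by (simp add: closed_fork_def)
  have hG: "height ?G \<le> height F"
  proof -
    have "finite F" using F by (simp add: is_fork_def)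
    moreover have "[] \<in> ?G" using fG by (simp add: is_fork_def)
    moreover have "?G \<subseteq> F" unfolding trim_def by auto
    ultimately show ?thesis unfolding height_def
      by (intro Max_mono) auto
  qed
  obtain s1 where s1: "prefix s1 t1" "honest_vertex ?w s1" "length t1 - length s1 \<le> reserve ?w s1"
    using hp[OF F t(1)] by blast
  obtain s2 where s2: "prefix s2 t2" "honest_vertex ?w s2" "length t2 - length s2 \<le> reserve ?w s2"
    using hp[OF F t(2)] by blast
  have Fpc: "\<And>v u. v \<in> F \<Longrightarrow> prefix u v \<Longrightarrow> u \<in> F" using F by (simp add: is_fork_def)
  have sG: "s1 \<in> ?G" "s2 \<in> ?G" using s1 s2 t Fpc unfolding trim_def by auto
  have djs: "disjoint_over (length x) s1 s2"
    using dj s1(1) s2(1) prefix_order.trans unfolding disjoint_over_def by blast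
  have "reach ?w ?G s1 \<ge> 0" using s1 l hG unfolding reach_def gap_def by simp
  moreover have "reach ?w ?G s2 \<ge> 0" using s2 l hG unfolding reach_def gap_def by simp
  ultimately have "0 \<le> mu_fork x y ?G" using mu_fork_ge[OF fG sG djs] by simp
  also have "mu_fork x y ?G \<le> mu x y" unfolding mu_def
    using mu_set_fin G by (intro Max_ge) auto
  finally show "mu x y \<ge> 0" .
next
  assume m: "mu x y \<ge> 0"
  let ?w = "x @ y"
  obtain F0 where "is_fork ?w F0" using exists_fork by blast
  hence "closed_fork ?w (trim ?w F0)" by (rule trim_closed)
  hence "mu x y \<in> {mu_fork x y F | F. closed_fork (x @ y) F}"
    unfolding mu_def using mu_set_fin by (intro Max_in) auto
  then obtain F where cF: "closed_fork ?w F" and mF: "mu_fork x y F = mu x y" by auto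
  have F: "is_fork ?w F" using cF by (simp add: closed_fork_def)
  let ?f = "(\<lambda>(t1,t2). min (reach (x @ y) F t1) (reach (x @ y) F t2))"
  have "Max (?f ` pairs (length x) F) \<in> ?f ` pairs (length x) F"
    using pairs_fin[OF F] pairs_ne[OF F] by (intro Max_in) auto
  then obtain t1 t2 where p: "(t1, t2) \<in> pairs (length x) F"
    and "mu_fork x y F = min (reach (x @ y) F t1) (reach (x @ y) F t2)"
    unfolding mu_fork_img by auto
  hence r: "reach ?w F t1 \<ge> 0" "reach ?w F t2 \<ge> 0" using m mF by auto
  have "t1 \<in> F" "t2 \<in> F" "disjoint_over (length x) t1 t2" using p by (auto simp: pairs_def)
  from extend[OF F this r] show "\<exists>F. x_balanced x y F" unfolding x_balanced_def by blast
qed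

end
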